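(* Let $W=C_3\wr\mathbb{Z}$ and $B(W)=\bigoplus_{\mathbb{Z}}C_3\trianglelefteq W$. If $H\le W$ is almost-normal (i.e. its normaliser $N_W(H)$ has finite index in $W$) and $H\not\subseteq B(W)$, then $|W:H|<\infty$.
   Context: $W=\bigoplus_{\mathbb{Z}}C_3\rtimes\mathbb{Z}$, with $\mathbb{Z}$ acting on $B(W)=\bigoplus_{\mathbb{Z}}C_3$ by shifting coordinates. *)

theory Defs
  imports "HOL-Algebra.Algebra"
begin

text \<open>An element is a pair (f, n) where
  f : int => int is a finitely supported configuration with values in {0,1,2}
  (representing C3 = Z/3Z), and n : int.\<close>

definition wr_carrier :: "((int \<Rightarrow> int) \<times> int) set" where
  "wr_carrier = {(f, n). (\<forall>i. f i \<in> {0, 1, 2}) \<and> finite {i. f i \<noteq> 0}}"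

definition wr_mult :: "((int \<Rightarrow> int) \<times> int) \<Rightarrow> ((int \<Rightarrow> int) \<times> int) \<Rightarrow> ((int \<Rightarrow> int) \<times> int)" where
  "wr_mult x y = ((\<lambda>i. (fst x i + fst y (i - snd x)) mod 3), snd x + snd y)"

definition W :: "((int \<Rightarrow> int) \<times> int) monoid" where
  "W = \<lparr>carrier = wr_carrier, monoid.mult = wr_mult, one = (\<lambda>_. 0, 0)\<rparr>"

definition BW :: "((int \<Rightarrow> int) \<times> int) set" where
  "BW = {x \<in> wr_carrier. snd x = 0}"

end

theory Submission
  imports Defs
begin

lemma W_simps [simp]: "carrier W = wr_carrier" "monoid.mult W = wr_mult" "one W = (\<lambda>_. 0, 0)"
  by (simp_all add: W_def)

lemma mem_wr [simp]: "(f, n) \<in> wr_carrier \<longleftrightarrow> (\<forall>i. f i \<in> {0,1,2}) \<and> finite {i. f i \<noteq> 0}"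
  by (simp add: wr_carrier_def)

lemma mod3_vals: "(x::int) mod 3 \<in> {0,1,2}"
  by auto

lemma wr_mult_simp [simp]: "wr_mult (f, n) (g, m) = ((\<lambda>i. (f i + g (i - n)) mod 3), n + m)"
  by (simp add: wr_mult_def)

lemma vals_mod [simp]: "\<forall>i. f i \<in> {0,1,2::int} \<Longrightarrow> f i mod 3 = f i"
  proof - assume "\<forall>i. f i \<in> {0,1,2::int}" hence "f i \<in> {0,1,2}" by blast thus ?thesis by auto qed

lemma mod3_cases: "(x::int) mod 3 = 0 \<or> x mod 3 = 1 \<or> x mod 3 = 2" by presburger

lemma group_W: "group W"
proof (rule groupI)
  fix x y assume x: "x \<in> carrier W" and y: "y \<in> carrier W"
  obtain f n g m where [simp]: "x = (f, n)" "y = (g, m)" by (cases x, cases y) auto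
  have "{i. (f i + g (i - n)) mod 3 \<noteq> 0} \<subseteq> {i. f i \<noteq> 0} \<union> (\<lambda>i. i + n) ` {i. g i \<noteq> 0}"
  proof
    fix i assume "i \<in> {i. (f i + g (i - n)) mod 3 \<noteq> 0}"
    hence "f i \<noteq> 0 \<or> g (i - n) \<noteq> 0" by auto
    thus "i \<in> {i. f i \<noteq> 0} \<union> (\<lambda>i. i + n) ` {i. g i \<noteq> 0}"
      by (auto intro!: image_eqI[where x="i - n"])
  qed
  moreover have "finite ({i. f i \<noteq> 0} \<union> (\<lambda>i. i + n) ` {i. g i \<noteq> 0})"
    using x y by simp
  ultimately show "x \<otimes>\<^bsub>W\<^esub> y \<in> carrier W"
    by (simp add: finite_subset mod3_cases)
next
  show "\<one>\<^bsub>W\<^esub> \<in> carrier W" by simp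
next
  fix x y z assume x: "x \<in> carrier W" and y: "y \<in> carrier W" and z: "z \<in> carrier W"
  obtain f n g m k l where [simp]: "x = (f, n)" "y = (g, m)" "z = (k, l)" by (cases x, cases y, cases z) auto
  show "x \<otimes>\<^bsub>W\<^esub> y \<otimes>\<^bsub>W\<^esub> z = x \<otimes>\<^bsub>W\<^esub> (y \<otimes>\<^bsub>W\<^esub> z)"
    by (simp add: mod_simps algebra_simps diff_diff_eq)
next
  fix x assume x: "x \<in> carrier W"
  obtain f n where [simp]: "x = (f, n)" by (cases x) auto
  show "\<one>\<^bsub>W\<^esub> \<otimes>\<^bsub>W\<^esub> x = x" using x by simp
next
  fix x assume x: "x \<in> carrier W"
  obtain f n where [simp]: "x = (f, n)" by (cases x) auto
  let ?y = "(\<lambda>i. (- f (i + n)) mod 3, - n)"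
  have "{i. (- f (i + n)) mod 3 \<noteq> 0} \<subseteq> (\<lambda>i. i - n) ` {i. f i \<noteq> 0}"
  proof
    fix i assume "i \<in> {i. (- f (i + n)) mod 3 \<noteq> 0}"
    hence "f (i + n) \<noteq> 0" by auto
    thus "i \<in> (\<lambda>i. i - n) ` {i. f i \<noteq> 0}" by (auto intro!: image_eqI[where x="i + n"])
  qed
  moreover have "finite ((\<lambda>i. i - n) ` {i. f i \<noteq> 0})" using x by simp
  ultimately have "?y \<in> carrier W" by (simp add: finite_subset mod3_cases)
  moreover have "?y \<otimes>\<^bsub>W\<^esub> x = \<one>\<^bsub>W\<^esub>"
    by (simp add: mod_simps)
  ultimately show "\<exists>y\<in>carrier W. y \<otimes>\<^bsub>W\<^esub> x = \<one>\<^bsub>W\<^esub>" by blast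
qed

lemma snd_mult: "snd (x \<otimes>\<^bsub>W\<^esub> y) = snd x + snd y"
  by (simp add: wr_mult_def)

lemma fst_mult: "fst (x \<otimes>\<^bsub>W\<^esub> y) = (\<lambda>i. (fst x i + fst y (i - snd x)) mod 3)"
  by (simp add: wr_mult_def)

lemma inv_W:
  assumes x: "(f, n) \<in> carrier W"
  shows "inv\<^bsub>W\<^esub> (f, n) = (\<lambda>i. (- f (i + n)) mod 3, - n)"
proof -
  interpret group W by (rule group_W)
  let ?y = "(\<lambda>i. (- f (i + n)) mod 3, - n)"
  have "{i. (- f (i + n)) mod 3 \<noteq> 0} \<subseteq> (\<lambda>i. i - n) ` {i. f i \<noteq> 0}"
  proof
    fix i assume "i \<in> {i. (- f (i + n)) mod 3 \<noteq> 0}"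
    hence "f (i + n) \<noteq> 0" by auto
    thus "i \<in> (\<lambda>i. i - n) ` {i. f i \<noteq> 0}" by (auto intro!: image_eqI[where x="i + n"])
  qed
  moreover have "finite ((\<lambda>i. i - n) ` {i. f i \<noteq> 0})" using x by simp
  ultimately have "?y \<in> carrier W" by (simp add: finite_subset mod3_cases)
  moreover have "?y \<otimes>\<^bsub>W\<^esub> (f, n) = \<one>\<^bsub>W\<^esub>"
    by (simp add: mod_simps)
  ultimately show ?thesis using inv_equality x by blast
qed

definition Dset :: "int \<Rightarrow> (int \<Rightarrow> int) set" where
  "Dset n = {g. \<exists>c r. finite {i. c i \<noteq> 0} \<and> (\<forall>i. \<bar>n\<bar> \<le> \<bar>i\<bar> \<longrightarrow> r i = 0)
      \<and> (\<forall>i. g i = c i - c (i - n) + r i)}"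

lemma DsetI:
  assumes "finite {i. c i \<noteq> 0}" "\<forall>i. \<bar>n\<bar> \<le> \<bar>i\<bar> \<longrightarrow> r i = 0" "\<forall>i. g i = c i - c (i - n) + r i"
  shows "g \<in> Dset n"
  unfolding Dset_def using assms by (intro CollectI exI conjI)

lemma D_add:
  assumes "g1 \<in> Dset n" "g2 \<in> Dset n"
  shows "(\<lambda>i. g1 i + g2 i) \<in> Dset n"
proof -
  obtain c1 r1 where 1: "finite {i. c1 i \<noteq> 0}" "\<forall>i. \<bar>n\<bar> \<le> \<bar>i\<bar> \<longrightarrow> r1 i = 0"
      "\<forall>i. g1 i = c1 i - c1 (i - n) + r1 i" using assms(1) unfolding Dset_def by blast
  obtain c2 r2 where 2: "finite {i. c2 i \<noteq> 0}" "\<forall>i. \<bar>n\<bar> \<le> \<bar>i\<bar> \<longrightarrow> r2 i = 0"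
      "\<forall>i. g2 i = c2 i - c2 (i - n) + r2 i" using assms(2) unfolding Dset_def by blast
  have "{i. c1 i + c2 i \<noteq> 0} \<subseteq> {i. c1 i \<noteq> 0} \<union> {i. c2 i \<noteq> 0}" by auto
  hence "finite {i. c1 i + c2 i \<noteq> 0}" using 1(1) 2(1) by (meson finite_Un finite_subset)
  moreover have "\<forall>i. \<bar>n\<bar> \<le> \<bar>i\<bar> \<longrightarrow> r1 i + r2 i = 0" using 1(2) 2(2) by simp
  moreover have "\<forall>i. g1 i + g2 i = (c1 i + c2 i) - (c1 (i - n) + c2 (i - n)) + (r1 i + r2 i)"
    using 1(3) 2(3) by simp
  ultimately show ?thesis by (rule DsetI)
qed

lemma D_delta_base:
  fixes k :: int
  assumes "\<bar>a\<bar> < \<bar>n\<bar>"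
  shows "(\<lambda>i. if i = a then k else 0) \<in> Dset n"
  by (rule DsetI[of "\<lambda>_. 0" _ "\<lambda>i. if i = a then k else 0"]) (use assms in auto)

lemma D_step:
  fixes k :: int
  assumes "(\<lambda>i. if i = b then k else 0) \<in> Dset n"
  shows "(\<lambda>i. if i = b + n then k else 0) \<in> Dset n"
proof -
  obtain c r where 1: "finite {i. c i \<noteq> 0}" "\<forall>i. \<bar>n\<bar> \<le> \<bar>i\<bar> \<longrightarrow> r i = 0"
      "\<forall>i. (if i = b then k else 0) = c i - c (i - n) + r i" using assms unfolding Dset_def by blast
  let ?c = "\<lambda>i. c i - (if i = b then k else 0)"
  have "{i. ?c i \<noteq> 0} \<subseteq> insert b {i. c i \<noteq> 0}" by auto
  hence "finite {i. ?c i \<noteq> 0}" using 1(1) by (meson finite_insert finite_subset)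
  moreover have "\<forall>i. (if i = b + n then k else 0) = ?c i - ?c (i - n) + r i"
  proof
    fix i show "(if i = b + n then k else 0) = ?c i - ?c (i - n) + r i"
      using 1(3)[rule_format, of i] by (cases "i = b"; cases "i = b + n") auto
  qed
  ultimately show ?thesis using 1(2) by (intro DsetI)
qed

lemma D_step_back:
  fixes k :: int
  assumes "(\<lambda>i. if i = b + n then k else 0) \<in> Dset n"
  shows "(\<lambda>i. if i = b then k else 0) \<in> Dset n"
proof -
  obtain c r where 1: "finite {i. c i \<noteq> 0}" "\<forall>i. \<bar>n\<bar> \<le> \<bar>i\<bar> \<longrightarrow> r i = 0"
      "\<forall>i. (if i = b + n then k else 0) = c i - c (i - n) + r i" using assms unfolding Dset_def by blast
  let ?c = "\<lambda>i. c i + (if i = b then k else 0)"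
  have "{i. ?c i \<noteq> 0} \<subseteq> insert b {i. c i \<noteq> 0}" by auto
  hence "finite {i. ?c i \<noteq> 0}" using 1(1) by (meson finite_insert finite_subset)
  moreover have "\<forall>i. (if i = b then k else 0) = ?c i - ?c (i - n) + r i"
  proof
    fix i show "(if i = b then k else 0) = ?c i - ?c (i - n) + r i"
      using 1(3)[rule_format, of i] by (cases "i = b"; cases "i = b + n") auto
  qed
  ultimately show ?thesis using 1(2) by (intro DsetI)
qed

lemma D_delta:
  fixes k :: int
  assumes "n \<noteq> 0"
  shows "(\<lambda>i. if i = j then k else 0) \<in> Dset n"
proof -
  define a where "a = j mod n"
  have a: "\<bar>a\<bar> < \<bar>n\<bar>" unfolding a_def using abs_mod_less[OF assms] .
  have up: "(\<lambda>i. if i = a + int q * n then k else 0) \<in> Dset n" for q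
  proof (induction q)
    case 0 thus ?case using D_delta_base[OF a] by simp
  next
    case (Suc q)
    from D_step[OF Suc] show ?case by (simp add: algebra_simps)
  qed
  have down: "(\<lambda>i. if i = a - int q * n then k else 0) \<in> Dset n" for q
  proof (induction q)
    case 0 thus ?case using D_delta_base[OF a] by simp
  next
    case (Suc q)
    have "a - int q * n = (a - int (Suc q) * n) + n" by (simp add: algebra_simps)
    with Suc have "(\<lambda>i. if i = (a - int (Suc q) * n) + n then k else 0) \<in> Dset n" by simp
    from D_step_back[OF this] show ?case .
  qed
  have j: "a + (j div n) * n = j" unfolding a_def by simp
  show ?thesis
  proof (cases "j div n \<ge> 0")
    case True
    then obtain q where "j div n = int q" using nonneg_int_cases by blast
    hence "a + int q * n = j" using j by simp
    with up[of q] show ?thesis by simp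
  next
    case False
    then obtain q where "j div n = - int q" by (intro that[of "nat (- (j div n))"]) simp
    hence "a - int q * n = j" using j by simp
    with down[of q] show ?thesis by simp
  qed
qed

lemma D_all:
  fixes g :: "int \<Rightarrow> int"
  assumes "n \<noteq> 0" "finite {i. g i \<noteq> 0}"
  shows "g \<in> Dset n"
proof -
  have "\<forall>g::int\<Rightarrow>int. {i. g i \<noteq> 0} \<subseteq> S \<longrightarrow> g \<in> Dset n" if "finite S" for S
    using that
  proof (induction S rule: finite_induct)
    case empty
    have d: "(\<lambda>i. if i = 0 then 0 else 0) \<in> Dset n" by (rule D_delta[OF assms(1)])
    show ?case
    proof (intro allI impI)
      fix g :: "int \<Rightarrow> int" assume "{i. g i \<noteq> 0} \<subseteq> {}"
      hence "g = (\<lambda>i. if i = 0 then 0 else 0)" by (auto simp: fun_eq_iff)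
      thus "g \<in> Dset n" using d by blast
    qed
  next
    case (insert j S)
    show ?case
    proof (intro allI impI)
      fix g :: "int \<Rightarrow> int" assume g: "{i. g i \<noteq> 0} \<subseteq> insert j S"
      let ?g = "\<lambda>i. if i = j then 0 else g i"
      have "{i. ?g i \<noteq> 0} \<subseteq> S" using g by auto
      hence "?g \<in> Dset n" by (rule insert.IH[rule_format])
      define G where "G = (\<lambda>i. (if i = j then g j else 0) + ?g i)"
      have "G \<in> Dset n" unfolding G_def by (rule D_add[OF D_delta[OF assms(1), of j "g j"] \<open>?g \<in> Dset n\<close>])
      moreover have "g = G" by (auto simp: G_def fun_eq_iff)
      ultimately show "g \<in> Dset n" by blast
    qed
  qed
  thus ?thesis using assms(2) by blast
qed

lemma fin_window: "finite {r :: int \<Rightarrow> int. (\<forall>i. r i \<in> {0,1,2}) \<and> (\<forall>i. \<bar>n\<bar> \<le> \<bar>i\<bar> \<longrightarrow> r i = 0)}"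
proof -
  let ?A = "{i::int. \<bar>i\<bar> < \<bar>n\<bar>}"
  have fA: "finite ?A"
    by (rule finite_subset[of _ "{-\<bar>n\<bar>..\<bar>n\<bar>}"]) auto
  have "{r :: int \<Rightarrow> int. (\<forall>i. r i \<in> {0,1,2}) \<and> (\<forall>i. \<bar>n\<bar> \<le> \<bar>i\<bar> \<longrightarrow> r i = 0)}
      \<subseteq> (\<lambda>p i. if i \<in> ?A then p i else 0) ` (?A \<rightarrow>\<^sub>E {0,1,2})"
  proof
    fix r :: "int \<Rightarrow> int" assume r: "r \<in> {r. (\<forall>i. r i \<in> {0,1,2}) \<and> (\<forall>i. \<bar>n\<bar> \<le> \<bar>i\<bar> \<longrightarrow> r i = 0)}"
    show "r \<in> (\<lambda>p i. if i \<in> ?A then p i else 0) ` (?A \<rightarrow>\<^sub>E {0,1,2})"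
    proof (rule image_eqI[of _ _ "restrict r ?A"])
      show "r = (\<lambda>i. if i \<in> ?A then restrict r ?A i else 0)"
        using r by (auto simp: fun_eq_iff)
      show "restrict r ?A \<in> ?A \<rightarrow>\<^sub>E {0,1,2}" using r by auto
    qed
  qed
  moreover have "finite ((\<lambda>p i. if i \<in> ?A then p i else 0) ` (?A \<rightarrow>\<^sub>E {0,1,2::int}))"
    using fA by (intro finite_imageI finite_PiE) auto
  ultimately show ?thesis by (rule finite_subset)
qed

lemma mod3_identity:
  fixes c1 c2 g1 g2 r :: int
  shows "(c1 - c2 + r) mod 3 = (((c1 mod 3 + (- g1) mod 3) mod 3 - (c2 mod 3 + (- g2) mod 3) mod 3) mod 3 + (g1 - g2 + r mod 3) mod 3) mod 3"
proof -
  have 1: "(c1 mod 3 + (- g1) mod 3) mod 3 = (c1 - g1) mod 3" by (simp add: mod_add_eq)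
  have 2: "(c2 mod 3 + (- g2) mod 3) mod 3 = (c2 - g2) mod 3" by (simp add: mod_add_eq)
  have 3: "((c1 - g1) mod 3 - (c2 - g2) mod 3) mod 3 = ((c1 - g1) - (c2 - g2)) mod 3" by (rule mod_diff_eq)
  have 4: "(g1 - g2 + r mod 3) mod 3 = (g1 - g2 + r) mod 3" by (rule mod_add_right_eq)
  have 5: "(((c1 - g1) - (c2 - g2)) mod 3 + (g1 - g2 + r) mod 3) mod 3 = (((c1 - g1) - (c2 - g2)) + (g1 - g2 + r)) mod 3"
    by (rule mod_add_eq)
  have 6: "((c1 - g1) - (c2 - g2)) + (g1 - g2 + r) = c1 - c2 + r" by simp
  show ?thesis unfolding 1 2 3 4 5 6 ..
qed

lemma BW_alt: "BW = {x \<in> carrier W. snd x = 0}"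
  by (simp add: BW_def W_def)

declare W_simps[simp del]

theorem proposition4p6:
  assumes "subgroup H W"
    and "finite (rcosets\<^bsub>W\<^esub> (normalizer W H))"
    and "\<not> H \<subseteq> BW"
  shows "finite (rcosets\<^bsub>W\<^esub> H)"
proof -
  note HW = assms(1) and fin = assms(2) and notB = assms(3)
  interpret G: group W by (rule group_W)
  interpret H: subgroup H W by (rule HW)
  have Hsub: "H \<subseteq> carrier W" by (rule H.subset)
  obtain h where h: "h \<in> H" "snd h \<noteq> 0" using notB Hsub unfolding BW_alt by (auto simp: W_simps)
  obtain f n where hfn: "h = (f, n)" by (cases h)
  have n0: "n \<noteq> 0" using h hfn by simp
  have hc: "(f, n) \<in> carrier W" using h(1) Hsub hfn by blast
  define N where "N = normalizer W H"
  have NW: "subgroup N W" unfolding N_def using G.normalizer_imp_subgroup[OF Hsub] .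
  interpret N: subgroup N W by (rule NW)
  have conj: "x \<otimes>\<^bsub>W\<^esub> y \<otimes>\<^bsub>W\<^esub> inv\<^bsub>W\<^esub> x \<in> H" if "x \<in> N" "y \<in> H" for x y
  proof -
    have "x <#\<^bsub>W\<^esub> H #>\<^bsub>W\<^esub> inv\<^bsub>W\<^esub> x = H" using that(1) Hsub unfolding N_def normalizer_def stabilizer_def by auto
    moreover have "x \<otimes>\<^bsub>W\<^esub> y \<otimes>\<^bsub>W\<^esub> inv\<^bsub>W\<^esub> x \<in> x <#\<^bsub>W\<^esub> H #>\<^bsub>W\<^esub> inv\<^bsub>W\<^esub> x" using that(2) unfolding l_coset_def r_coset_def by auto
    ultimately show ?thesis by simp
  qed
  have comm: "((\<lambda>i. (\<xi> i - \<xi> (i - n)) mod 3), 0) \<in> H" if "(\<xi>, 0) \<in> N" "(\<xi>, 0) \<in> carrier W" for \<xi>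
  proof -
    have "(\<xi>, 0) \<otimes>\<^bsub>W\<^esub> h \<otimes>\<^bsub>W\<^esub> inv\<^bsub>W\<^esub> (\<xi>, 0) \<in> H" by (rule conj[OF that(1) h(1)])
    hence "(\<xi>, 0) \<otimes>\<^bsub>W\<^esub> h \<otimes>\<^bsub>W\<^esub> inv\<^bsub>W\<^esub> (\<xi>, 0) \<otimes>\<^bsub>W\<^esub> inv\<^bsub>W\<^esub> h \<in> H" using h(1) by simp
    moreover have "(\<xi>, 0) \<otimes>\<^bsub>W\<^esub> h \<otimes>\<^bsub>W\<^esub> inv\<^bsub>W\<^esub> (\<xi>, 0) \<otimes>\<^bsub>W\<^esub> inv\<^bsub>W\<^esub> h = ((\<lambda>i. (\<xi> i - \<xi> (i - n)) mod 3), 0)"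
      using inv_W[OF that(2)] inv_W[OF hc] by (simp add: hfn mod_simps W_simps)
    ultimately show ?thesis by simp
  qed
  define C0 where "C0 = (\<lambda>C. SOME y. y \<in> C \<inter> BW) ` {C \<in> rcosets\<^bsub>W\<^esub> N. C \<inter> BW \<noteq> {}}"
  have C0fin: "finite C0" using fin unfolding C0_def N_def by auto
  have C0B: "C0 \<subseteq> BW"
  proof
    fix y assume "y \<in> C0"
    then obtain C where "C \<inter> BW \<noteq> {}" "y = (SOME y. y \<in> C \<inter> BW)" unfolding C0_def by auto
    thus "y \<in> BW" by (metis IntE some_in_eq)
  qed
  have rep: "\<exists>c0\<in>C0. x \<otimes>\<^bsub>W\<^esub> inv\<^bsub>W\<^esub> c0 \<in> N" if "x \<in> BW" for x
  proof -
    have xc: "x \<in> carrier W" using that unfolding BW_alt by simp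
    let ?C = "N #>\<^bsub>W\<^esub> x"
    have Cr: "?C \<in> rcosets\<^bsub>W\<^esub> N" unfolding RCOSETS_def using xc by auto
    have "x \<in> ?C" using G.rcos_self[OF xc NW] .
    hence ne: "?C \<inter> BW \<noteq> {}" using that by auto
    define y where "y = (SOME y. y \<in> ?C \<inter> BW)"
    have yC0: "y \<in> C0" unfolding C0_def y_def using Cr ne by auto
    have "y \<in> ?C \<inter> BW" unfolding y_def using ne by (metis some_in_eq)
    then obtain z where z: "z \<in> N" "y = z \<otimes>\<^bsub>W\<^esub> x" unfolding r_coset_def by auto
    have zc: "z \<in> carrier W" using z(1) N.subset by auto
    have "x \<otimes>\<^bsub>W\<^esub> inv\<^bsub>W\<^esub> y = inv\<^bsub>W\<^esub> z"
      using z(2) xc zc by (simp add: G.inv_mult_group G.m_assoc[symmetric])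
    hence "x \<otimes>\<^bsub>W\<^esub> inv\<^bsub>W\<^esub> y \<in> N" using z(1) by simp
    thus ?thesis using yC0 by blast
  qed
  have stepC: "\<forall>w\<in>carrier W. nat \<bar>snd w\<bar> = M \<longrightarrow> (\<exists>x\<in>H. \<bar>snd (x \<otimes>\<^bsub>W\<^esub> w)\<bar> < \<bar>n\<bar>)" for M
  proof (induction M rule: less_induct)
    case (less M)
    show ?case
    proof (intro ballI impI)
      fix w assume w: "w \<in> carrier W" "nat \<bar>snd w\<bar> = M"
      show "\<exists>x\<in>H. \<bar>snd (x \<otimes>\<^bsub>W\<^esub> w)\<bar> < \<bar>n\<bar>"
      proof (cases "\<bar>snd w\<bar> < \<bar>n\<bar>")
        case True
        then show ?thesis using H.one_closed w(1) by (intro bexI[of _ "\<one>\<^bsub>W\<^esub>"]) auto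
      next
        case False
        define x0 where "x0 = (if snd w * n > 0 then inv\<^bsub>W\<^esub> h else h)"
        have x0H: "x0 \<in> H" unfolding x0_def using h(1) by simp
        have x0c: "x0 \<in> carrier W" using x0H Hsub by auto
        have sinv: "snd (inv\<^bsub>W\<^esub> h) = - n" using inv_W[OF hc] hfn by simp
        have sx0: "snd x0 = (if snd w * n > 0 then - n else n)" unfolding x0_def using sinv hfn by simp
        have "\<bar>snd w + snd x0\<bar> < \<bar>snd w\<bar>"
        proof (cases "snd w * n > 0")
          case True
          then have "(snd w > 0 \<and> n > 0) \<or> (snd w < 0 \<and> n < 0)" by (simp add: zero_less_mult_iff)
          thus ?thesis using True False sx0 by auto
        next
          case F: False
          then have "(snd w \<ge> 0 \<and> n < 0) \<or> (snd w \<le> 0 \<and> n > 0)" using n0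
            by (auto simp: zero_less_mult_iff not_less)
          thus ?thesis using F False sx0 by auto
        qed
        hence lt: "nat \<bar>snd (x0 \<otimes>\<^bsub>W\<^esub> w)\<bar> < M" using w(2) by (simp add: snd_mult add.commute)
        have "x0 \<otimes>\<^bsub>W\<^esub> w \<in> carrier W" using x0c w(1) by simp
        then obtain x' where x': "x' \<in> H" "\<bar>snd (x' \<otimes>\<^bsub>W\<^esub> (x0 \<otimes>\<^bsub>W\<^esub> w))\<bar> < \<bar>n\<bar>"
          using less.IH[OF lt] by blast
        have "x' \<otimes>\<^bsub>W\<^esub> (x0 \<otimes>\<^bsub>W\<^esub> w) = (x' \<otimes>\<^bsub>W\<^esub> x0) \<otimes>\<^bsub>W\<^esub> w" using x' Hsub x0c w(1) by (simp add: G.m_assoc subsetD)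
        moreover have "x' \<otimes>\<^bsub>W\<^esub> x0 \<in> H" using x' x0H by simp
        ultimately show ?thesis using x' by metis
      qed
    qed
  qed
  define Rw where "Rw = {r :: int \<Rightarrow> int. (\<forall>i. r i \<in> {0,1,2}) \<and> (\<forall>i. \<bar>n\<bar> \<le> \<bar>i\<bar> \<longrightarrow> r i = 0)}"
  define F where "F = (\<lambda>(c0, r, m). ((\<lambda>i. (fst c0 i - fst c0 (i - n) + r i) mod 3), m)) ` (C0 \<times> Rw \<times> {m::int. \<bar>m\<bar> < \<bar>n\<bar>})"
  have Ffin: "finite F"
  proof -
    have "finite {m::int. \<bar>m\<bar> < \<bar>n\<bar>}" by (rule finite_subset[of _ "{-\<bar>n\<bar>..\<bar>n\<bar>}"]) auto
    moreover have "finite Rw" unfolding Rw_def by (rule fin_window)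
    ultimately show ?thesis unfolding F_def using C0fin by auto
  qed
  have stepD: "\<exists>k\<in>H. \<exists>rp\<in>F. rp \<in> carrier W \<and> w = k \<otimes>\<^bsub>W\<^esub> rp" if w: "w \<in> carrier W" "\<bar>snd w\<bar> < \<bar>n\<bar>" for w
  proof -
    obtain g m where wgm: "w = (g, m)" by (cases w)
    have gfin: "finite {i. g i \<noteq> 0}" and gv: "\<forall>i. g i \<in> {0,1,2}" using w(1) wgm by (auto simp: W_simps)
    have "g \<in> Dset n" by (rule D_all[OF n0 gfin])
    then obtain c r where cr: "finite {i. c i \<noteq> 0}" "\<forall>i. \<bar>n\<bar> \<le> \<bar>i\<bar> \<longrightarrow> r i = 0"
      "\<forall>i. g i = c i - c (i - n) + r i" unfolding Dset_def by blast
    define c' where "c' = (\<lambda>i. c i mod 3)"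
    have "{i. c' i \<noteq> 0} \<subseteq> {i. c i \<noteq> 0}" unfolding c'_def by auto
    hence "finite {i. c' i \<noteq> 0}" using cr(1) finite_subset by blast
    hence c'B: "(c', 0) \<in> BW" unfolding BW_def c'_def by (simp add: mod3_cases)
    obtain c0 where c0: "c0 \<in> C0" "(c', 0) \<otimes>\<^bsub>W\<^esub> inv\<^bsub>W\<^esub> c0 \<in> N" using rep[OF c'B] by blast
    obtain \<gamma>0 where g0: "c0 = (\<gamma>0, 0)" "(\<gamma>0, 0) \<in> carrier W" using C0B c0(1) unfolding BW_alt
      by (cases c0) auto
    have c'c: "(c', 0) \<in> carrier W" using c'B unfolding BW_alt by simp
    define x where "x = (c', 0) \<otimes>\<^bsub>W\<^esub> inv\<^bsub>W\<^esub> c0"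
    have xN: "x \<in> N" using c0(2) x_def by simp
    have xfst: "x = ((\<lambda>i. (c' i + (- \<gamma>0 i) mod 3) mod 3), 0)"
      unfolding x_def g0(1) using inv_W[OF g0(2)] by (simp add: W_simps)
    define \<xi> where "\<xi> = (\<lambda>i. (c' i + (- \<gamma>0 i) mod 3) mod 3)"
    have xc: "(\<xi>, 0) \<in> carrier W" using xN N.subset xfst \<xi>_def by auto
    have kH: "((\<lambda>i. (\<xi> i - \<xi> (i - n)) mod 3), 0) \<in> H"
      using comm[of \<xi>] xN xfst xc \<xi>_def by simp
    define r' where "r' = (\<lambda>i. r i mod 3)"
    have r'R: "r' \<in> Rw" unfolding Rw_def r'_def using cr(2) by (simp add: mod3_cases)
    define rp where "rp = ((\<lambda>i. (\<gamma>0 i - \<gamma>0 (i - n) + r' i) mod 3), m)"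
    have rpF: "rp \<in> F" unfolding F_def rp_def using c0(1) g0(1) r'R w(2) wgm
      by (intro image_eqI[of _ _ "(c0, r', m)"]) auto
    have rpc: "rp \<in> carrier W"
    proof -
      have "{i. (\<gamma>0 i - \<gamma>0 (i - n) + r' i) mod 3 \<noteq> 0} \<subseteq>
          {i. \<gamma>0 i \<noteq> 0} \<union> (\<lambda>i. i + n) ` {i. \<gamma>0 i \<noteq> 0} \<union> {i. \<bar>i\<bar> < \<bar>n\<bar>}"
      proof
        fix i assume "i \<in> {i. (\<gamma>0 i - \<gamma>0 (i - n) + r' i) mod 3 \<noteq> 0}"
        hence "\<gamma>0 i \<noteq> 0 \<or> \<gamma>0 (i - n) \<noteq> 0 \<or> r' i \<noteq> 0" by auto
        moreover have "r' i \<noteq> 0 \<Longrightarrow> \<bar>i\<bar> < \<bar>n\<bar>" using r'R unfolding Rw_def by (auto simp: not_less)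
        ultimately show "i \<in> {i. \<gamma>0 i \<noteq> 0} \<union> (\<lambda>i. i + n) ` {i. \<gamma>0 i \<noteq> 0} \<union> {i. \<bar>i\<bar> < \<bar>n\<bar>}"
          by (auto intro!: image_eqI[where x="i - n"])
      qed
      moreover have "finite ({i. \<gamma>0 i \<noteq> 0} \<union> (\<lambda>i. i + n) ` {i. \<gamma>0 i \<noteq> 0} \<union> {i. \<bar>i\<bar> < \<bar>n\<bar>})"
      proof -
        have "finite {i::int. \<bar>i\<bar> < \<bar>n\<bar>}" by (rule finite_subset[of _ "{-\<bar>n\<bar>..\<bar>n\<bar>}"]) auto
        thus ?thesis using g0(2) by (simp add: W_simps)
      qed
      ultimately show ?thesis unfolding rp_def by (simp add: finite_subset mod3_cases W_simps)
    qed
    have eq: "w = ((\<lambda>i. (\<xi> i - \<xi> (i - n)) mod 3), 0) \<otimes>\<^bsub>W\<^esub> rp"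
    proof -
      have "g i = ((\<xi> i - \<xi> (i - n)) mod 3 + (\<gamma>0 i - \<gamma>0 (i - n) + r' i) mod 3) mod 3" for i
      proof -
        have "g i = g i mod 3" using gv vals_mod by metis
        also have "\<dots> = (c i - c (i - n) + r i) mod 3" using cr(3) by simp
        also have "\<dots> = ((\<xi> i - \<xi> (i - n)) mod 3 + (\<gamma>0 i - \<gamma>0 (i - n) + r' i) mod 3) mod 3"
          unfolding \<xi>_def c'_def r'_def by (rule mod3_identity)
        finally show ?thesis .
      qed
      hence geq: "g = (\<lambda>i. ((\<xi> i - \<xi> (i - n)) mod 3 + (\<gamma>0 i - \<gamma>0 (i - n) + r' i) mod 3) mod 3)"
        by (rule ext)
      have "((\<lambda>i. (\<xi> i - \<xi> (i - n)) mod 3), 0) \<otimes>\<^bsub>W\<^esub> rp =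
          ((\<lambda>i. ((\<xi> i - \<xi> (i - n)) mod 3 + (\<gamma>0 i - \<gamma>0 (i - n) + r' i) mod 3) mod 3), m)"
        unfolding rp_def W_simps wr_mult_simp by simp
      thus ?thesis unfolding wgm geq by simp
    qed
    show ?thesis using kH rpF rpc eq by blast
  qed
  have cov: "\<exists>rp\<in>F. rp \<in> carrier W \<and> w \<in> H #>\<^bsub>W\<^esub> rp" if w: "w \<in> carrier W" for w
  proof -
    obtain x where x: "x \<in> H" "\<bar>snd (x \<otimes>\<^bsub>W\<^esub> w)\<bar> < \<bar>n\<bar>" using stepC w by blast
    have xc: "x \<in> carrier W" using x(1) Hsub by auto
    have "x \<otimes>\<^bsub>W\<^esub> w \<in> carrier W" using xc w by simp
    then obtain k rp where k: "k \<in> H" "rp \<in> F" "rp \<in> carrier W" "x \<otimes>\<^bsub>W\<^esub> w = k \<otimes>\<^bsub>W\<^esub> rp"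
      using stepD x(2) by blast
    have kc: "k \<in> carrier W" using k(1) Hsub by auto
    have "w = inv\<^bsub>W\<^esub> x \<otimes>\<^bsub>W\<^esub> (x \<otimes>\<^bsub>W\<^esub> w)" using xc w by (simp add: G.m_assoc[symmetric])
    also have "\<dots> = (inv\<^bsub>W\<^esub> x \<otimes>\<^bsub>W\<^esub> k) \<otimes>\<^bsub>W\<^esub> rp" using k(4) xc kc k(3) by (simp add: G.m_assoc)
    finally have "w = (inv\<^bsub>W\<^esub> x \<otimes>\<^bsub>W\<^esub> k) \<otimes>\<^bsub>W\<^esub> rp" .
    moreover have "inv\<^bsub>W\<^esub> x \<otimes>\<^bsub>W\<^esub> k \<in> H" using x(1) k(1) by simp
    ultimately have "w \<in> H #>\<^bsub>W\<^esub> rp" unfolding r_coset_def by blast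
    thus ?thesis using k(2,3) by blast
  qed
  have "rcosets\<^bsub>W\<^esub> H \<subseteq> (\<lambda>rp. H #>\<^bsub>W\<^esub> rp) ` F"
  proof
    fix C assume "C \<in> rcosets\<^bsub>W\<^esub> H"
    then obtain w where w: "w \<in> carrier W" "C = H #>\<^bsub>W\<^esub> w" unfolding RCOSETS_def by auto
    then obtain rp where rp: "rp \<in> F" "rp \<in> carrier W" "w \<in> H #>\<^bsub>W\<^esub> rp" using cov by blast
    have "H #>\<^bsub>W\<^esub> rp = H #>\<^bsub>W\<^esub> w" using G.repr_independence[OF rp(3) rp(2) HW] .
    thus "C \<in> (\<lambda>rp. H #>\<^bsub>W\<^esub> rp) ` F" using w(2) rp(1) by auto
  qed
  thus ?thesis using Ffin finite_subset by blast
qed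

end
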